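(* Suppose $\mu$ is a singular limit of strongly compact cardinals and $\lambda>\mu$ is a regular cardinal. If $S=\langle I\times\kappa,\mathcal{R}\rangle$ is a strong $\lambda$-system with $\kappa\le\mu$ and $|\mathcal{R}|<\mu$, then $S$ has a cofinal branch. In particular, $\mu^+$ satisfies the strong system property.
   Context: Let $\lambda$ be an infinite regular cardinal. A relation $R$ is tree-like if $a<_R c$ and $b<_R c$ imply $a,b$ are $R$-comparable ($a=b$, $a<_Rb$ or $b<_Ra$). A $\lambda$-system $\langle I\times\kappa,\mathcal{R}\rangle$ consists of an unbounded $I\subseteq\lambda$, $0<\kappa<\lambda$, levels $S_\alpha=\{\alpha\}\times\kappa$ for $\alpha\in I$ (with $S$ denoting their union), and a set $\mathcal{R}$ of binary transitive tree-like relations on $S$ with $|\mathcal{R}|<\lambda$, such that $(\alpha_0,\beta_0)<_R(\alpha_1,\beta_1)$ implies $\alpha_0<\alpha_1$, and for all $\alpha_0<\alpha_1$ in $I$ there are $\beta_0,\beta_1<\kappa$ and $R\in\mathcal{R}$ with $(\alpha_0,\beta_0)<_R(\alpha_1,\beta_1)$. It is strong if for all $\alpha_0<\alpha_1$ in $I$ and every $\beta_1<\kappa$ there are $\beta_0<\kappa$, $R\in\mathcal{R}$ with $(\alpha_0,\beta_0)<_R(\alpha_1,\beta_1)$. A branch through $R$ is a set of pairwise $R$-comparable elements; cofinal if it meets $S_\alpha$ for unboundedly many $\alpha\in I$. A regular $\lambda$ satisfies the strong system property if every strong $\lambda$-system $\langle I\times\kappa,\mathcal{R}\rangle$ with $|\mathcal{R}|^+<\lambda$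 has a cofinal branch. *)

theory Defs
  imports Main
begin

unbundle cardinal_syntax

text \<open>Ordinals are represented by the elements of a type 'u, ordered by a well-order
  r on UNIV. The ordinal a is identified with its set of predecessors underS r a.\<close>

definition ord_card :: "'u rel \<Rightarrow> 'u \<Rightarrow> bool" where
  "ord_card r a \<longleftrightarrow> (\<forall>b \<in> underS r a. |underS r b| <o |underS r a| )"

definition infinite_card :: "'u rel \<Rightarrow> 'u \<Rightarrow> bool" where
  "infinite_card r a \<longleftrightarrow> ord_card r a \<and> infinite (underS r a)"

definition unbounded_in :: "'u rel \<Rightarrow> 'u set \<Rightarrow> 'u \<Rightarrow> bool" where
  "unbounded_in r A l \<longleftrightarrow> A \<subseteq> underS r l \<and> (\<forall>a \<in> underS r l. \<exists>b \<in> A. (a, b) \<in> r)"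

definition regular_card :: "'u rel \<Rightarrow> 'u \<Rightarrow> bool" where
  "regular_card r l \<longleftrightarrow> infinite_card r l \<and>
     (\<forall>A. unbounded_in r A l \<longrightarrow> |A| =o |underS r l| )"

definition singular_card :: "'u rel \<Rightarrow> 'u \<Rightarrow> bool" where
  "singular_card r l \<longleftrightarrow> infinite_card r l \<and> \<not> regular_card r l"

definition is_card_succ :: "'u rel \<Rightarrow> 'u \<Rightarrow> 'u \<Rightarrow> bool" where
  "is_card_succ r m l \<longleftrightarrow> ord_card r l \<and> m \<in> underS r l \<and>
     (\<forall>g \<in> underS r l. |underS r g| \<le>o |underS r m| )"

definition P_kappa :: "'u rel \<Rightarrow> 'u \<Rightarrow> 'u set \<Rightarrow> 'u set set" where
  "P_kappa r k X = {a. a \<subseteq> X \<and> |a| <o |underS r k| }"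

definition complete_ultrafilter :: "'u rel \<Rightarrow> 'u \<Rightarrow> 'a set \<Rightarrow> 'a set set \<Rightarrow> bool" where
  "complete_ultrafilter r k P U \<longleftrightarrow>
     U \<subseteq> Pow P \<and> P \<in> U \<and> {} \<notin> U \<and>
     (\<forall>A B. A \<in> U \<and> A \<subseteq> B \<and> B \<subseteq> P \<longrightarrow> B \<in> U) \<and>
     (\<forall>A. A \<subseteq> P \<longrightarrow> A \<in> U \<or> P - A \<in> U) \<and>
     (\<forall>F. F \<subseteq> U \<and> F \<noteq> {} \<and> |F| <o |underS r k| \<longrightarrow> \<Inter>F \<in> U)"

definition fine_measure :: "'u rel \<Rightarrow> 'u \<Rightarrow> 'u set \<Rightarrow> 'u set set set \<Rightarrow> bool" where
  "fine_measure r k X U \<longleftrightarrow> complete_ultrafilter r k (P_kappa r k X) U \<and>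
     (\<forall>x \<in> X. {a \<in> P_kappa r k X. x \<in> a} \<in> U)"

text \<open>Strong compactness, relativized to the sets of type 'u.\<close>

definition strongly_compact :: "'u rel \<Rightarrow> 'u \<Rightarrow> bool" where
  "strongly_compact r k \<longleftrightarrow> regular_card r k \<and> \<not> ( |underS r k| \<le>o |UNIV :: nat set| ) \<and>
     (\<forall>X :: 'u set. \<exists>U. fine_measure r k X U)"

definition singular_limit_of_strongly_compacts :: "'u rel \<Rightarrow> 'u \<Rightarrow> bool" where
  "singular_limit_of_strongly_compacts r m \<longleftrightarrow> singular_card r m \<and>
     (\<forall>a \<in> underS r m. \<exists>k \<in> underS r m. a \<in> underS r k \<and> strongly_compact r k)"

text \<open>lambda-systems. The underlying set is S = I \<times> k, level S_a = {a} \<times> k.\<close>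

definition tree_like :: "'a rel \<Rightarrow> bool" where
  "tree_like R \<longleftrightarrow> (\<forall>a b c. (a, c) \<in> R \<and> (b, c) \<in> R \<longrightarrow> a = b \<or> (a, b) \<in> R \<or> (b, a) \<in> R)"

definition lambda_system :: "'u rel \<Rightarrow> 'u \<Rightarrow> 'u set \<Rightarrow> 'u \<Rightarrow> ('u \<times> 'u) rel set \<Rightarrow> bool" where
  "lambda_system r l I k \<R> \<longleftrightarrow>
     unbounded_in r I l \<and> underS r k \<noteq> {} \<and> k \<in> underS r l \<and> |\<R>| <o |underS r l| \<and>
     (\<forall>R \<in> \<R>. R \<subseteq> (I \<times> underS r k) \<times> (I \<times> underS r k) \<and> trans R \<and> tree_like R \<and>
        (\<forall>a0 b0 a1 b1. ((a0, b0), (a1, b1)) \<in> R \<longrightarrow> a0 \<in> underS r a1)) \<and>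
     (\<forall>a0 \<in> I. \<forall>a1 \<in> I. a0 \<in> underS r a1 \<longrightarrow>
        (\<exists>b0 \<in> underS r k. \<exists>b1 \<in> underS r k. \<exists>R \<in> \<R>. ((a0, b0), (a1, b1)) \<in> R))"

definition strong_lambda_system :: "'u rel \<Rightarrow> 'u \<Rightarrow> 'u set \<Rightarrow> 'u \<Rightarrow> ('u \<times> 'u) rel set \<Rightarrow> bool" where
  "strong_lambda_system r l I k \<R> \<longleftrightarrow> lambda_system r l I k \<R> \<and>
     (\<forall>a0 \<in> I. \<forall>a1 \<in> I. a0 \<in> underS r a1 \<longrightarrow>
        (\<forall>b1 \<in> underS r k. \<exists>b0 \<in> underS r k. \<exists>R \<in> \<R>. ((a0, b0), (a1, b1)) \<in> R))"

definition is_branch :: "'u rel \<Rightarrow> 'u set \<Rightarrow> 'u \<Rightarrow> ('u \<times> 'u) rel \<Rightarrow> ('u \<times> 'u) set \<Rightarrow> bool" where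
  "is_branch r I k R b \<longleftrightarrow> b \<subseteq> I \<times> underS r k \<and>
     (\<forall>x \<in> b. \<forall>y \<in> b. x = y \<or> (x, y) \<in> R \<or> (y, x) \<in> R)"

definition has_cofinal_branch :: "'u rel \<Rightarrow> 'u \<Rightarrow> 'u set \<Rightarrow> 'u \<Rightarrow> ('u \<times> 'u) rel set \<Rightarrow> bool" where
  "has_cofinal_branch r l I k \<R> \<longleftrightarrow>
     (\<exists>R \<in> \<R>. \<exists>b. is_branch r I k R b \<and> unbounded_in r {a \<in> I. \<exists>c. (a, c) \<in> b} l)"

text \<open>|R|^+ < l is expressed as: some ordinal g < l has |R| < |g|.\<close>

definition strong_system_property :: "'u rel \<Rightarrow> 'u \<Rightarrow> bool" where
  "strong_system_property r l \<longleftrightarrow> regular_card r l \<and>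
     (\<forall>I k \<R>. strong_lambda_system r l I k \<R> \<and> (\<exists>g \<in> underS r l. |\<R>| <o |underS r g| ) \<longrightarrow>
        has_cofinal_branch r l I k \<R>)"

end

theory Submission
  imports Defs
begin

unbundle cardinal_syntax


lemma US_iff: "x \<in> underS r a \<longleftrightarrow> (x,a) \<in> r \<and> x \<noteq> a"
  by (auto simp: underS_def)

lemma US_trans: assumes "well_order r" "x \<in> underS r a" "(a,b) \<in> r" shows "x \<in> underS r b"
proof -
  have t: "trans r" and an: "antisym r" using assms(1) by (auto simp: well_order_on_def linear_order_on_def partial_order_on_def preorder_on_def)
  have "(x,b) \<in> r" using assms t by (auto simp: US_iff trans_def)
  moreover have "x \<noteq> b" using assms an by (auto simp: US_iff antisym_def)
  ultimately show ?thesis by (simp add: US_iff)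
qed

lemma US_trans2: assumes "well_order r" "x \<in> underS r a" "a \<in> underS r b" shows "x \<in> underS r b"
  using US_trans[OF assms(1) assms(2)] assms(3) by (simp add: US_iff)

lemma US_not: assumes "well_order r" "x \<in> underS r a" shows "(a,x) \<notin> r"
proof -
  have an: "antisym r" using assms(1) by (auto simp: well_order_on_def linear_order_on_def partial_order_on_def)
  show ?thesis using assms an by (auto simp: US_iff antisym_def)
qed

lemma US_total: assumes "well_order r" "x \<in> Field r" "a \<in> Field r" "(a,x) \<notin> r" shows "x \<in> underS r a"
proof -
  have "total r" and "refl r" using assms(1) unfolding well_order_on_def linear_order_on_def partial_order_on_def preorder_on_def by blast+
  then have "\<forall>x y. x \<noteq> y \<longrightarrow> (x, y) \<in> r \<or> (y, x) \<in> r" "\<forall>x. (x,x) \<in> r" by (auto simp: total_on_def refl_on_def)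
  then have "x \<noteq> a" using assms(4) by auto
  then show ?thesis using assms(4) \<open>\<forall>x y. x \<noteq> y \<longrightarrow> (x, y) \<in> r \<or> (y, x) \<in> r\<close> unfolding US_iff by blast
qed

lemma US_Field: "underS r a \<subseteq> Field r"
  by (auto simp: underS_def Field_def)

lemma US_refl: assumes "well_order r" "x \<in> Field r" shows "(x,x) \<in> r"
  using assms by (auto simp: well_order_on_def linear_order_on_def partial_order_on_def preorder_on_def refl_on_def)

lemma reg_inf: "regular_card r l \<Longrightarrow> infinite_card r l" by (simp add: regular_card_def)
lemma inf_ord: "infinite_card r l \<Longrightarrow> ord_card r l" by (simp add: infinite_card_def)
lemma sc_reg: "strongly_compact r k \<Longrightarrow> regular_card r k" by (simp add: strongly_compact_def)

lemma ordc_less: "ord_card r a \<Longrightarrow> b \<in> underS r a \<Longrightarrow> |underS r b| <o |underS r a|"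
  by (simp add: ord_card_def)

lemma bnd: assumes wo: "well_order r" and reg: "regular_card r l" and X: "X \<subseteq> underS r l"
  and c: "|X| <o |underS r l|"
  shows "\<exists>x \<in> underS r l. \<forall>y \<in> X. y \<in> underS r x"
proof -
  have "\<not> unbounded_in r X l"
  proof
    assume "unbounded_in r X l"
    then have "|X| =o |underS r l|" using reg by (simp add: regular_card_def)
    then show False using c not_ordLess_ordIso by blast
  qed
  then obtain a where a: "a \<in> underS r l" "\<forall>b\<in>X. (a,b) \<notin> r" using X by (auto simp: unbounded_in_def)
  have "\<forall>y\<in>X. y \<in> underS r a"
    using a X US_Field[of r l] by (auto intro!: US_total[OF wo])
  then show ?thesis using a by blast
qed

lemma fin_less: "finite A \<Longrightarrow> infinite X \<Longrightarrow> |A| <o |X|"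
  using finite_ordLess_infinite[OF card_of_Well_order card_of_Well_order] by (simp add: Field_card_of)

lemma times_less: assumes "|A| <o |X|" "|B| <o |X|" "infinite X"
  shows "|A \<times> B| <o |X|"
proof (cases "A = {} \<or> B = {}")
  case True
  then have "finite (A \<times> B)" by auto
  then show ?thesis using assms(3) by (rule fin_less)
next
  case False
  show ?thesis
  proof (cases "finite A \<and> finite B")
    case True
    then have "finite (A \<times> B)" by simp
    then show ?thesis using assms(3) by (rule fin_less)
  next
    case nf: False
    have "|B| \<le>o |A| \<or> |A| \<le>o |B|" by (rule ordLeq_total[OF card_of_Well_order card_of_Well_order])
    then show ?thesis
    proof
      assume le: "|B| \<le>o |A|"
      have "infinite A" using nf card_of_ordLeq_finite[OF le] by auto
      have "|A \<times> B| =o |A|" using card_of_Times_infinite[OF \<open>infinite A\<close> _ le] False by auto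
      then show ?thesis by (rule ordIso_ordLess_trans[OF _ assms(1)])
    next
      assume le: "|A| \<le>o |B|"
      have "infinite B" using nf card_of_ordLeq_finite[OF le] by auto
      have "|B \<times> A| =o |B| \<and> |A \<times> B| =o |B|" using card_of_Times_infinite[OF \<open>infinite B\<close> _ le] False by auto
      then show ?thesis using ordIso_ordLess_trans[OF _ assms(2)] by auto
    qed
  qed
qed




lemma sc_infinite: "strongly_compact r n \<Longrightarrow> infinite (underS r n)"
  unfolding strongly_compact_def regular_card_def infinite_card_def by (elim conjE)

lemma reg_ord: "regular_card r l \<Longrightarrow> ord_card r l"
  unfolding regular_card_def infinite_card_def by (elim conjE)

lemma rfl: "well_order r \<Longrightarrow> (x,x) \<in> r"
  unfolding well_order_on_def linear_order_on_def partial_order_on_def preorder_on_def refl_on_def by blast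

lemma FU: assumes "well_order r" shows "Field r = UNIV"
  using well_order_on_Field[OF assms] by (rule sym)

lemma WO: assumes "well_order r" shows "Well_order r"
  using assms FU[OF assms] by simp

lemma US_tot: "well_order r \<Longrightarrow> (a,x) \<notin> r \<Longrightarrow> x \<in> underS r a"
  using US_total[of r x a] FU[of r] by simp

lemma below_card: assumes wo: "well_order r" and c: "|Y| <o |underS r m|"
  shows "\<exists>a \<in> underS r m. |Y| \<le>o |underS r a|"
proof -
  define W where "W = Restr r (underS r m)"
  have WW: "Well_order W" unfolding W_def using Well_order_Restr WO[OF wo] by blast
  have FW: "Field W = underS r m"
  proof
    show "Field W \<subseteq> underS r m" unfolding W_def Field_def by auto
    show "underS r m \<subseteq> Field W"
    proof
      fix x assume "x \<in> underS r m"
      then have "(x,x) \<in> W" unfolding W_def using rfl[OF wo] by auto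
      then show "x \<in> Field W" by (auto simp: Field_def)
    qed
  qed
  have "|underS r m| \<le>o W" using card_of_least[of "underS r m" W] WW FW by simp
  then have "|Y| <o W" using c ordLess_ordLeq_trans by blast
  then obtain a where a: "a \<in> Field W" "|Y| =o Restr W (underS W a)"
    using ordLess_iff_ordIso_Restr[OF WW card_of_Well_order] by blast
  have 1: "|Field |Y|| \<le>o |Field (Restr W (underS W a))|"
    by (rule card_of_mono2[OF ordIso_imp_ordLeq[OF a(2)]])
  have sub: "Field (Restr W (underS W a)) \<subseteq> underS r a"
    unfolding W_def Field_def underS_def by auto
  have "|Y| \<le>o |underS r a|"
    using ordLeq_transitive[OF 1 card_of_mono1[OF sub]] by (simp add: Field_card_of)
  then show ?thesis using a(1) FW by auto
qed

lemma sl_inf: "singular_limit_of_strongly_compacts r m \<Longrightarrow> infinite_card r m"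
  by (simp add: singular_limit_of_strongly_compacts_def singular_card_def)

lemma get_sc: assumes wo: "well_order r" and sl: "singular_limit_of_strongly_compacts r m"
  and c1: "|Y1| <o |underS r m|" and c2: "|Y2| <o |underS r m|"
  shows "\<exists>n \<in> underS r m. strongly_compact r n \<and> |Y1| <o |underS r n| \<and> |Y2| <o |underS r n|"
proof -
  obtain a1 where a1: "a1 \<in> underS r m" "|Y1| \<le>o |underS r a1|" using below_card[OF wo c1] by blast
  obtain a2 where a2: "a2 \<in> underS r m" "|Y2| \<le>o |underS r a2|" using below_card[OF wo c2] by blast
  have "\<exists>a. a \<in> underS r m \<and> (a1,a) \<in> r \<and> (a2,a) \<in> r"
  proof (cases "(a1,a2) \<in> r")
    case True then show ?thesis using a2(1) rfl[OF wo, of a2] by blast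
  next
    case False
    then have "a2 \<in> underS r a1" by (rule US_tot[OF wo])
    then have "(a2,a1) \<in> r" by (simp add: US_iff)
    then show ?thesis using a1(1) rfl[OF wo, of a1] by blast
  qed
  then obtain a where a: "a \<in> underS r m" "(a1,a) \<in> r" "(a2,a) \<in> r" by blast
  have "\<forall>a \<in> underS r m. \<exists>k \<in> underS r m. a \<in> underS r k \<and> strongly_compact r k"
    using sl unfolding singular_limit_of_strongly_compacts_def by (rule conjunct2)
  then obtain n where n: "n \<in> underS r m" "a \<in> underS r n" "strongly_compact r n"
    using a(1) by blast
  have oc: "ord_card r n" by (rule inf_ord[OF reg_inf[OF sc_reg[OF n(3)]]])
  have u1: "underS r a1 \<subseteq> underS r a" using US_trans[OF wo _ a(2)] by blast
  have u2: "underS r a2 \<subseteq> underS r a" using US_trans[OF wo _ a(3)] by blast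
  have an: "|underS r a| <o |underS r n|" using ordc_less[OF oc n(2)] .
  have "|Y1| <o |underS r n|"
    by (rule ordLeq_ordLess_trans[OF ordLeq_transitive[OF a1(2) card_of_mono1[OF u1]] an])
  moreover have "|Y2| <o |underS r n|"
    by (rule ordLeq_ordLess_trans[OF ordLeq_transitive[OF a2(2) card_of_mono1[OF u2]] an])
  ultimately show ?thesis using n by blast
qed



lemma ultra:
  assumes wo: "well_order r" and sc: "strongly_compact r n" and reg: "regular_card r l"
    and nl: "n \<in> underS r l" and I: "unbounded_in r I l"
  shows "\<exists>U. U \<subseteq> Pow I \<and> {} \<notin> U \<and> (\<forall>B\<in>U. \<forall>C\<in>U. B \<inter> C \<in> U) \<and>
     (\<forall>a\<in>I. {b\<in>I. a \<in> underS r b} \<in> U) \<and>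
     (\<forall>X V (g::'u \<Rightarrow> 'b). X \<in> U \<longrightarrow> g ` X \<subseteq> V \<longrightarrow> |V| <o |underS r n| \<longrightarrow>
         (\<exists>v\<in>V. {x\<in>X. g x = v} \<in> U))"
proof -
  obtain U0 where fm: "fine_measure r n I U0" using sc unfolding strongly_compact_def by blast
  define P where "P = P_kappa r n I"
  have cu: "complete_ultrafilter r n P U0" and fine: "\<forall>x\<in>I. {a \<in> P. x \<in> a} \<in> U0"
    using fm unfolding fine_measure_def P_def by auto
  have cu2: "U0 \<subseteq> Pow P \<and> P \<in> U0 \<and> {} \<notin> U0 \<and>
     (\<forall>A B. A \<in> U0 \<and> A \<subseteq> B \<and> B \<subseteq> P \<longrightarrow> B \<in> U0) \<and>
     (\<forall>A. A \<subseteq> P \<longrightarrow> A \<in> U0 \<or> P - A \<in> U0) \<and>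
     (\<forall>F. F \<subseteq> U0 \<and> F \<noteq> {} \<and> |F| <o |underS r n| \<longrightarrow> \<Inter>F \<in> U0)"
    using cu unfolding complete_ultrafilter_def .
  have eU: "{} \<notin> U0" using cu2 by (elim conjE)
  have upA: "\<forall>A B. A \<in> U0 \<and> A \<subseteq> B \<and> B \<subseteq> P \<longrightarrow> B \<in> U0" using cu2 by (elim conjE)
  have ultA: "\<forall>A. A \<subseteq> P \<longrightarrow> A \<in> U0 \<or> P - A \<in> U0" using cu2 by (elim conjE)
  have cmpA: "\<forall>F. F \<subseteq> U0 \<and> F \<noteq> {} \<and> |F| <o |underS r n| \<longrightarrow> \<Inter>F \<in> U0" using cu2 by (elim conjE)
  have up: "B \<in> U0" if "A \<in> U0" "A \<subseteq> B" "B \<subseteq> P" for A B using upA that by blast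
  have ult: "A \<in> U0 \<or> P - A \<in> U0" if "A \<subseteq> P" for A using ultA that by blast
  have cmp: "\<Inter>F \<in> U0" if "F \<subseteq> U0" "F \<noteq> {}" "|F| <o |underS r n|" for F using cmpA that by blast
  have infn: "infinite (underS r n)" by (rule sc_infinite[OF sc])
  have int0: "A \<inter> B \<in> U0" if "A \<in> U0" "B \<in> U0" for A B
  proof -
    have "|{A,B}| <o |underS r n|" by (rule fin_less[OF _ infn]) simp
    moreover have "{A,B} \<subseteq> U0" using that by simp
    moreover have "{A,B} \<noteq> {}" by simp
    ultimately have "\<Inter>{A,B} \<in> U0" using cmp by blast
    then show ?thesis by simp
  qed
  have ocl: "ord_card r l" by (rule reg_ord[OF reg])
  have nlc: "|underS r n| <o |underS r l|" using ordc_less[OF ocl nl] .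
  have Il: "I \<subseteq> underS r l" using I unfolding unbounded_in_def by blast
  have ex: "\<exists>i. i \<in> I \<and> (\<forall>y\<in>a. y \<in> underS r i)" if "a \<in> P" for a
  proof -
    have aI: "a \<subseteq> I" and ca: "|a| <o |underS r n|" using that unfolding P_def P_kappa_def by auto
    have "|a| <o |underS r l|" using ca nlc ordLess_transitive by blast
    moreover have "a \<subseteq> underS r l" using aI Il by blast
    ultimately obtain x where x: "x \<in> underS r l" "\<forall>y\<in>a. y \<in> underS r x"
      using bnd[OF wo reg] by blast
    obtain i where i: "i \<in> I" "(x,i) \<in> r" using I x(1) unfolding unbounded_in_def by blast
    show ?thesis using i x(2) US_trans[OF wo _ i(2)] by blast
  qed
  define f where "f a = (SOME i. i \<in> I \<and> (\<forall>y\<in>a. y \<in> underS r i))" for a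
  have fP: "f a \<in> I \<and> (\<forall>y\<in>a. y \<in> underS r (f a))" if "a \<in> P" for a
    unfolding f_def using someI_ex[OF ex[OF that]] .
  define pre where "pre B = {a\<in>P. f a \<in> B}" for B
  define U where "U = {B. B \<subseteq> I \<and> pre B \<in> U0}"
  have "U \<subseteq> Pow I" unfolding U_def by auto
  moreover have "{} \<notin> U" using eU unfolding U_def pre_def by auto
  moreover have "\<forall>B\<in>U. \<forall>C\<in>U. B \<inter> C \<in> U"
  proof (intro ballI)
    fix B C assume "B \<in> U" "C \<in> U"
    then have "pre B \<inter> pre C \<in> U0" "B \<inter> C \<subseteq> I" using int0 unfolding U_def by auto
    moreover have "pre (B \<inter> C) = pre B \<inter> pre C" unfolding pre_def by auto
    ultimately show "B \<inter> C \<in> U" unfolding U_def by auto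
  qed
  moreover have "\<forall>a\<in>I. {b\<in>I. a \<in> underS r b} \<in> U"
  proof
    fix a assume aI: "a \<in> I"
    have "{c \<in> P. a \<in> c} \<subseteq> pre {b\<in>I. a \<in> underS r b}" unfolding pre_def using fP by auto
    then have "pre {b\<in>I. a \<in> underS r b} \<in> U0" using up fine aI unfolding pre_def by blast
    then show "{b\<in>I. a \<in> underS r b} \<in> U" unfolding U_def by auto
  qed
  moreover have "\<forall>X V (g::'u \<Rightarrow> 'b). X \<in> U \<longrightarrow> g ` X \<subseteq> V \<longrightarrow> |V| <o |underS r n| \<longrightarrow>
         (\<exists>v\<in>V. {x\<in>X. g x = v} \<in> U)"
  proof (intro allI impI)
    fix X V and g :: "'u \<Rightarrow> 'b"
    assume XU: "X \<in> U" and gV: "g ` X \<subseteq> V" and cV: "|V| <o |underS r n|"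
    show "\<exists>v\<in>V. {x\<in>X. g x = v} \<in> U"
    proof (rule ccontr)
      assume no: "\<not> ?thesis"
      define fib where "fib v = {x\<in>X. g x = v}" for v
      have XI: "X \<subseteq> I" and preX: "pre X \<in> U0" using XU unfolding U_def by auto
      have nf: "P - pre (fib v) \<in> U0" if "v \<in> V" for v
      proof -
        have "fib v \<subseteq> I" using XI unfolding fib_def by auto
        then have "pre (fib v) \<notin> U0" using no that unfolding U_def fib_def by auto
        moreover have "pre (fib v) \<subseteq> P" unfolding pre_def by auto
        ultimately show ?thesis using ult by blast
      qed
      have "X \<noteq> {}" using XU \<open>{} \<notin> U\<close> by auto
      then have Vne: "V \<noteq> {}" using gV by auto
      define F where "F = (\<lambda>v. pre X \<inter> (P - pre (fib v))) ` V"
      have "F \<subseteq> U0" unfolding F_def using int0 preX nf by auto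
      moreover have "F \<noteq> {}" using Vne unfolding F_def by auto
      moreover have "|F| <o |underS r n|" unfolding F_def using card_of_image ordLeq_ordLess_trans cV by blast
      ultimately have "\<Inter>F \<in> U0" using cmp by blast
      then have "\<Inter>F \<noteq> {}" using eU by auto
      then obtain a where a: "a \<in> \<Inter>F" by blast
      obtain v0 where v0: "v0 \<in> V" using Vne by auto
      have "pre X \<inter> (P - pre (fib v0)) \<in> F" unfolding F_def using v0 by blast
      then have "a \<in> pre X" using a by blast
      then have aP: "a \<in> P" and faX: "f a \<in> X" unfolding pre_def by auto
      then have gv: "g (f a) \<in> V" using gV by auto
      have "pre X \<inter> (P - pre (fib (g (f a)))) \<in> F" unfolding F_def using gv by blast
      then have "a \<in> P - pre (fib (g (f a)))" using a by blast
      moreover have "a \<in> pre (fib (g (f a)))" using aP faX unfolding pre_def fib_def by auto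
      ultimately show False by auto
    qed
  qed
  ultimately show ?thesis by blast
qed



lemma ph: assumes wo: "well_order r" and reg: "regular_card r l" and J: "unbounded_in r J l"
  and gV: "g ` J \<subseteq> V" and cV: "|V| <o |underS r l|"
  shows "\<exists>v\<in>V. unbounded_in r {x\<in>J. g x = v} l"
proof (rule ccontr)
  assume no: "\<not> ?thesis"
  have Jl: "J \<subseteq> underS r l" using J unfolding unbounded_in_def by blast
  have exb: "\<exists>b. b \<in> underS r l \<and> (\<forall>x\<in>{x\<in>J. g x = v}. (b,x) \<notin> r)" if "v \<in> V" for v
    using no that Jl unfolding unbounded_in_def by blast
  define bf where "bf v = (SOME b. b \<in> underS r l \<and> (\<forall>x\<in>{x\<in>J. g x = v}. (b,x) \<notin> r))" for v
  have bfp: "bf v \<in> underS r l \<and> (\<forall>x\<in>{x\<in>J. g x = v}. (bf v,x) \<notin> r)" if "v \<in> V" for v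
    unfolding bf_def using someI_ex[OF exb[OF that]] .
  have "|bf ` V| <o |underS r l|" using card_of_image ordLeq_ordLess_trans cV by blast
  moreover have "bf ` V \<subseteq> underS r l" using bfp by auto
  ultimately obtain c where c: "c \<in> underS r l" "\<forall>y\<in>bf ` V. y \<in> underS r c"
    using bnd[OF wo reg] by blast
  obtain x where x: "x \<in> J" "(c,x) \<in> r" using J c(1) unfolding unbounded_in_def by blast
  have gx: "g x \<in> V" using gV x(1) by auto
  have "(bf (g x), x) \<notin> r" using bfp[OF gx] x(1) by auto
  then have "x \<in> underS r (bf (g x))" using US_tot[OF wo] by blast
  moreover have "bf (g x) \<in> underS r c" using c(2) gx by auto
  ultimately have "x \<in> underS r c" using US_trans2[OF wo] by blast
  then show False using US_not[OF wo] x(2) by blast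
qed

lemma narrow:
  fixes W :: "'w set" and RR :: "('u \<times> 'w) rel set"
  assumes wo: "well_order r" and sc: "strongly_compact r n" and reg: "regular_card r l"
    and nl: "n \<in> underS r l" and J: "unbounded_in r J l"
    and cW: "|W| <o |underS r n|" and cR: "|RR| <o |underS r n|"
    and tl: "\<forall>R\<in>RR. tree_like R"
    and conn: "\<forall>a\<in>J. \<forall>b\<in>J. a \<in> underS r b \<longrightarrow> (\<exists>d\<in>W. \<exists>d'\<in>W. \<exists>R\<in>RR. ((a,d),(b,d')) \<in> R)"
  shows "\<exists>R\<in>RR. \<exists>bb. bb \<subseteq> J \<times> W \<and> (\<forall>x\<in>bb. \<forall>y\<in>bb. x = y \<or> (x,y) \<in> R \<or> (y,x) \<in> R) \<and>
           unbounded_in r {a\<in>J. \<exists>c. (a,c) \<in> bb} l"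
proof -
  define V where "V = W \<times> W \<times> RR"
  have "\<exists>U. U \<subseteq> Pow J \<and> {} \<notin> U \<and> (\<forall>B\<in>U. \<forall>C\<in>U. B \<inter> C \<in> U) \<and>
     (\<forall>a\<in>J. {b\<in>J. a \<in> underS r b} \<in> U) \<and>
     (\<forall>X V' (g::'u \<Rightarrow> 'w \<times> 'w \<times> ('u \<times> 'w) rel). X \<in> U \<longrightarrow> g ` X \<subseteq> V' \<longrightarrow> |V'| <o |underS r n| \<longrightarrow>
         (\<exists>v\<in>V'. {x\<in>X. g x = v} \<in> U))"
    by (rule ultra[OF wo sc reg nl J])
  then obtain U where UU: "U \<subseteq> Pow J \<and> {} \<notin> U \<and> (\<forall>B\<in>U. \<forall>C\<in>U. B \<inter> C \<in> U) \<and>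
     (\<forall>a\<in>J. {b\<in>J. a \<in> underS r b} \<in> U) \<and>
     (\<forall>X V' (g::'u \<Rightarrow> 'w \<times> 'w \<times> ('u \<times> 'w) rel). X \<in> U \<longrightarrow> g ` X \<subseteq> V' \<longrightarrow> |V'| <o |underS r n| \<longrightarrow>
         (\<exists>v\<in>V'. {x\<in>X. g x = v} \<in> U))" ..
  note U = UU[THEN conjunct1] UU[THEN conjunct2, THEN conjunct1] UU[THEN conjunct2, THEN conjunct2, THEN conjunct1]
    UU[THEN conjunct2, THEN conjunct2, THEN conjunct2, THEN conjunct1] UU[THEN conjunct2, THEN conjunct2, THEN conjunct2, THEN conjunct2]
  have infn: "infinite (underS r n)" by (rule sc_infinite[OF sc])
  have cV: "|V| <o |underS r n|" unfolding V_def using times_less[OF cW times_less[OF cW cR infn] infn] .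
  have ocl: "ord_card r l" by (rule reg_ord[OF reg])
  have cVl: "|V| <o |underS r l|" using cV ordc_less[OF ocl nl] ordLess_transitive by blast
  define c where "c a b = (SOME t. t \<in> V \<and> ((a, fst t), (b, fst (snd t))) \<in> snd (snd t))" for a b
  have cp: "c a b \<in> V \<and> ((a, fst (c a b)), (b, fst (snd (c a b)))) \<in> snd (snd (c a b))"
    if ab: "a \<in> J" "b \<in> J" "a \<in> underS r b" for a b
  proof -
    have "\<exists>d\<in>W. \<exists>d'\<in>W. \<exists>R\<in>RR. ((a,d),(b,d')) \<in> R" using conn ab by blast
    then obtain d d' R where "d\<in>W" "d'\<in>W" "R\<in>RR" "((a,d),(b,d')) \<in> R" by blast
    then have "\<exists>t. t \<in> V \<and> ((a, fst t), (b, fst (snd t))) \<in> snd (snd t)"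
      unfolding V_def by (intro exI[of _ "(d,d',R)"]) auto
    then show ?thesis unfolding c_def by (rule someI_ex)
  qed
  define T where "T a = {b\<in>J. a \<in> underS r b}" for a
  have exv: "\<exists>v\<in>V. {x\<in>T a. c a x = v} \<in> U" if "a \<in> J" for a
  proof -
    have Ta: "T a \<in> U" using U(4) that unfolding T_def by blast
    have Tb: "c a ` T a \<subseteq> V" using cp that unfolding T_def by auto
    show ?thesis using U(5)[rule_format, OF Ta Tb cV] .
  qed
  define val where "val a = (SOME v. v \<in> V \<and> {x\<in>T a. c a x = v} \<in> U)" for a
  have valp: "val a \<in> V \<and> {x\<in>T a. c a x = val a} \<in> U" if "a \<in> J" for a
    unfolding val_def using someI_ex[of "\<lambda>v. v \<in> V \<and> {x\<in>T a. c a x = v} \<in> U"] exv[OF that] by blast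
  obtain v where v: "v \<in> V" "unbounded_in r {x\<in>J. val x = v} l"
  proof -
    have "val ` J \<subseteq> V" using valp by blast
    then show ?thesis using that ph[OF wo reg J _ cVl] by blast
  qed
  obtain d d' R where dR: "v = (d,d',R)" "d \<in> W" "d' \<in> W" "R \<in> RR" using v(1) unfolding V_def by auto
  define J' where "J' = {x\<in>J. val x = v}"
  define bb where "bb = (\<lambda>a. (a,d)) ` J'"
  have "bb \<subseteq> J \<times> W" unfolding bb_def J'_def using dR by auto
  moreover have "\<forall>x\<in>bb. \<forall>y\<in>bb. x = y \<or> (x,y) \<in> R \<or> (y,x) \<in> R"
  proof (intro ballI)
    fix x y assume "x \<in> bb" "y \<in> bb"
    then obtain a a' where aa: "a \<in> J'" "a' \<in> J'" "x = (a,d)" "y = (a',d)" unfolding bb_def by auto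
    have aJ: "a \<in> J" "a' \<in> J" and va: "val a = v" "val a' = v" using aa unfolding J'_def by auto
    have i1: "{x\<in>T a. c a x = v} \<in> U" using valp[OF aJ(1)] va(1) by simp
    have i2: "{x\<in>T a'. c a' x = v} \<in> U" using valp[OF aJ(2)] va(2) by simp
    have "{x\<in>T a. c a x = v} \<inter> {x\<in>T a'. c a' x = v} \<in> U" using U(3) i1 i2 by blast
    then have "{x\<in>T a. c a x = v} \<inter> {x\<in>T a'. c a' x = v} \<noteq> {}" using U(2) by auto
    then obtain b where b: "b \<in> T a" "c a b = v" "b \<in> T a'" "c a' b = v" by blast
    have "((a,d),(b,d')) \<in> R" using cp[of a b] b aJ dR(1) unfolding T_def by auto
    moreover have "((a',d),(b,d')) \<in> R" using cp[of a' b] b aJ dR(1) unfolding T_def by auto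
    ultimately show "x = y \<or> (x,y) \<in> R \<or> (y,x) \<in> R" using tl dR(4) aa unfolding tree_like_def by blast
  qed
  moreover have "{a\<in>J. \<exists>c. (a,c) \<in> bb} = J'" unfolding bb_def J'_def by auto
  ultimately have "bb \<subseteq> J \<times> W \<and> (\<forall>x\<in>bb. \<forall>y\<in>bb. x = y \<or> (x,y) \<in> R \<or> (y,x) \<in> R) \<and>
           unbounded_in r {a\<in>J. \<exists>c. (a,c) \<in> bb} l" using v(2) unfolding J'_def by simp
  then show ?thesis using dR(4) by blast
qed



lemma sl_ex: assumes "singular_limit_of_strongly_compacts r m" "a \<in> underS r m"
  shows "\<exists>k \<in> underS r m. a \<in> underS r k \<and> strongly_compact r k"
proof -
  have "\<forall>a \<in> underS r m. \<exists>k \<in> underS r m. a \<in> underS r k \<and> strongly_compact r k"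
    using assms(1) unfolding singular_limit_of_strongly_compacts_def by (rule conjunct2)
  then show ?thesis using assms(2) by blast
qed

lemma main_general:
  fixes r :: "'u rel"
  assumes wo: "well_order r" and sl: "singular_limit_of_strongly_compacts r m"
    and reg: "regular_card r l" and ml: "m \<in> underS r l"
    and sys: "strong_lambda_system r l I k RR"
    and ck: "|underS r k| \<le>o |underS r m|" and cR: "|RR| <o |underS r m|"
  shows "has_cofinal_branch r l I k RR"
proof -
  have LS: "lambda_system r l I k RR" using sys unfolding strong_lambda_system_def by (elim conjE)
  have strong: "\<forall>a0 \<in> I. \<forall>a1 \<in> I. a0 \<in> underS r a1 \<longrightarrow>
        (\<forall>b1 \<in> underS r k. \<exists>b0 \<in> underS r k. \<exists>R \<in> RR. ((a0, b0), (a1, b1)) \<in> R)"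
    using sys unfolding strong_lambda_system_def by (elim conjE)
  have I: "unbounded_in r I l" using LS unfolding lambda_system_def by (elim conjE)
  have kne: "underS r k \<noteq> {}" using LS unfolding lambda_system_def by (elim conjE)
  have RpA: "\<forall>R \<in> RR. R \<subseteq> (I \<times> underS r k) \<times> (I \<times> underS r k) \<and> trans R \<and> tree_like R \<and>
        (\<forall>a0 b0 a1 b1. ((a0, b0), (a1, b1)) \<in> R \<longrightarrow> a0 \<in> underS r a1)"
    using LS unfolding lambda_system_def by (elim conjE)
  have Rp: "\<forall>R \<in> RR. tree_like R \<and> (\<forall>a0 b0 a1 b1. ((a0, b0), (a1, b1)) \<in> R \<longrightarrow> a0 \<in> underS r a1)"
    using RpA by simp
  obtain d0 where d0: "d0 \<in> underS r k" using kne by blast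
  have infm: "infinite_card r m" by (rule sl_inf[OF sl])
  have ocm: "ord_card r m" by (rule inf_ord[OF infm])
  have "singular_card r m" using sl unfolding singular_limit_of_strongly_compacts_def by (elim conjE)
  then have "\<not> regular_card r m" unfolding singular_card_def by (elim conjE)
  then have "\<exists>A. unbounded_in r A m \<and> \<not> |A| =o |underS r m|" using infm unfolding regular_card_def by blast
  then obtain A where A: "unbounded_in r A m" "\<not> |A| =o |underS r m|" by blast
  have Am: "A \<subseteq> underS r m" using A(1) unfolding unbounded_in_def by blast
  have cA: "|A| <o |underS r m|" using card_of_mono1[OF Am] A(2) ordLeq_iff_ordLess_or_ordIso by blast
  obtain n where n: "n \<in> underS r m" "strongly_compact r n" "|A| <o |underS r n|" "|RR| <o |underS r n|"
    using get_sc[OF wo sl cA cR] by blast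
  have nl: "n \<in> underS r l" using US_trans2[OF wo n(1) ml] .
  have infn: "infinite (underS r n)" by (rule sc_infinite[OF n(2)])
  have ocl: "ord_card r l" by (rule reg_ord[OF reg])
  have "\<exists>f. inj_on f (underS r k) \<and> f ` underS r k \<subseteq> underS r m"
    unfolding card_of_ordLeq by (rule ck)
  then obtain h where h: "inj_on h (underS r k)" "h ` underS r k \<subseteq> underS r m" by blast
  have pex: "\<exists>c. c \<in> A \<and> h d \<in> underS r c" if "d \<in> underS r k" for d
  proof -
    have "h d \<in> underS r m" using h that by auto
    then have "\<exists>k' \<in> underS r m. h d \<in> underS r k' \<and> strongly_compact r k'" by (rule sl_ex[OF sl])
    then obtain k' where "k' \<in> underS r m" "h d \<in> underS r k'" by blast
    moreover obtain c where "c \<in> A" "(k',c) \<in> r" using A(1) \<open>k' \<in> underS r m\<close> unfolding unbounded_in_def by blast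
    ultimately show ?thesis using US_trans[OF wo] by blast
  qed
  define p where "p d = (SOME c. c \<in> A \<and> h d \<in> underS r c)" for d
  have pp: "p d \<in> A \<and> h d \<in> underS r (p d)" if "d \<in> underS r k" for d
    unfolding p_def using someI_ex[OF pex[OF that]] .
  have "\<exists>U. U \<subseteq> Pow I \<and> {} \<notin> U \<and> (\<forall>B\<in>U. \<forall>C\<in>U. B \<inter> C \<in> U) \<and>
     (\<forall>a\<in>I. {b\<in>I. a \<in> underS r b} \<in> U) \<and>
     (\<forall>X V' (g::'u \<Rightarrow> 'u \<times> ('u \<times> 'u) rel). X \<in> U \<longrightarrow> g ` X \<subseteq> V' \<longrightarrow> |V'| <o |underS r n| \<longrightarrow>
         (\<exists>v\<in>V'. {x\<in>X. g x = v} \<in> U))"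
    by (rule ultra[OF wo n(2) reg nl I])
  then obtain U where UU: "U \<subseteq> Pow I \<and> {} \<notin> U \<and> (\<forall>B\<in>U. \<forall>C\<in>U. B \<inter> C \<in> U) \<and>
     (\<forall>a\<in>I. {b\<in>I. a \<in> underS r b} \<in> U) \<and>
     (\<forall>X V' (g::'u \<Rightarrow> 'u \<times> ('u \<times> 'u) rel). X \<in> U \<longrightarrow> g ` X \<subseteq> V' \<longrightarrow> |V'| <o |underS r n| \<longrightarrow>
         (\<exists>v\<in>V'. {x\<in>X. g x = v} \<in> U))" ..
  note U = UU[THEN conjunct1] UU[THEN conjunct2, THEN conjunct1] UU[THEN conjunct2, THEN conjunct2, THEN conjunct1]
    UU[THEN conjunct2, THEN conjunct2, THEN conjunct2, THEN conjunct1] UU[THEN conjunct2, THEN conjunct2, THEN conjunct2, THEN conjunct2]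
  define dd where "dd a b = (SOME t. t \<in> underS r k \<times> RR \<and> ((a, fst t), (b, d0)) \<in> snd t)" for a b
  have ddp: "dd a b \<in> underS r k \<times> RR \<and> ((a, fst (dd a b)), (b, d0)) \<in> snd (dd a b)"
    if ab: "a \<in> I" "b \<in> I" "a \<in> underS r b" for a b
  proof -
    have "\<exists>d \<in> underS r k. \<exists>R \<in> RR. ((a,d),(b,d0)) \<in> R" using strong ab d0 by blast
    then obtain d R where "d \<in> underS r k" "R \<in> RR" "((a,d),(b,d0)) \<in> R" by blast
    then have "\<exists>t. t \<in> underS r k \<times> RR \<and> ((a, fst t), (b, d0)) \<in> snd t"
      by (intro exI[of _ "(d,R)"]) auto
    then show ?thesis unfolding dd_def by (rule someI_ex)
  qed
  define g where "g a b = (p (fst (dd a b)), snd (dd a b))" for a b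
  define V where "V = A \<times> RR"
  have cV: "|V| <o |underS r n|" unfolding V_def using times_less[OF n(3) n(4) infn] .
  have cVl: "|V| <o |underS r l|" using cV ordc_less[OF ocl nl] ordLess_transitive by blast
  define T where "T a = {b\<in>I. a \<in> underS r b}" for a
  have exv: "\<exists>v\<in>V. {x\<in>T a. g a x = v} \<in> U" if "a \<in> I" for a
  proof -
    have Ta: "T a \<in> U" using U(4) that unfolding T_def by blast
    have Tb: "g a ` T a \<subseteq> V"
    proof
      fix y assume "y \<in> g a ` T a"
      then obtain x where x: "x \<in> T a" "y = g a x" by blast
      have xI: "x \<in> I" "a \<in> underS r x" using x(1) unfolding T_def by auto
      have "dd a x \<in> underS r k \<times> RR" using ddp[OF that xI] by (rule conjunct1)
      then have "fst (dd a x) \<in> underS r k" "snd (dd a x) \<in> RR" by auto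
      then have "p (fst (dd a x)) \<in> A" using pp by blast
      then show "y \<in> V" using x(2) \<open>snd (dd a x) \<in> RR\<close> unfolding g_def V_def by simp
    qed
    show ?thesis using U(5)[rule_format, OF Ta Tb cV] .
  qed
  define val where "val a = (SOME v. v \<in> V \<and> {x\<in>T a. g a x = v} \<in> U)" for a
  have valp: "val a \<in> V \<and> {x\<in>T a. g a x = val a} \<in> U" if "a \<in> I" for a
    unfolding val_def using someI_ex[of "\<lambda>v. v \<in> V \<and> {x\<in>T a. g a x = v} \<in> U"] exv[OF that] by blast
  obtain v where v: "v \<in> V" "unbounded_in r {x\<in>I. val x = v} l"
  proof -
    have "val ` I \<subseteq> V" using valp by blast
    then show ?thesis using that ph[OF wo reg I _ cVl] by blast
  qed
  obtain q R where qR: "v = (q,R)" "q \<in> A" "R \<in> RR" using v(1) unfolding V_def by auto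
  define J where "J = {x\<in>I. val x = v}"
  define W where "W = {d \<in> underS r k. p d = q}"
  have "|W| \<le>o |underS r q|"
  proof -
    have "inj_on h W" using h(1) unfolding W_def by (rule inj_on_subset) auto
    moreover have "h ` W \<subseteq> underS r q" using pp unfolding W_def by auto
    ultimately show ?thesis using card_of_ordLeq by blast
  qed
  moreover have "|underS r q| <o |underS r m|" using ordc_less[OF ocm] Am qR(2) by blast
  ultimately have cW: "|W| <o |underS r m|" using ordLeq_ordLess_trans by blast
  have im0: "infinite (underS r m)" using infm unfolding infinite_card_def by (elim conjE)
  have c1: "|{R}| <o |underS r m|" by (rule fin_less[OF _ im0]) simp
  obtain n' where n': "n' \<in> underS r m" "strongly_compact r n'" "|W| <o |underS r n'|" "|{R}| <o |underS r n'|"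
    using get_sc[OF wo sl cW c1] by blast
  have n'l: "n' \<in> underS r l" using US_trans2[OF wo n'(1) ml] .
  have conn: "\<forall>a\<in>J. \<forall>b\<in>J. a \<in> underS r b \<longrightarrow> (\<exists>d\<in>W. \<exists>d'\<in>W. \<exists>R'\<in>{R}. ((a,d),(b,d')) \<in> R')"
  proof (intro ballI impI)
    fix a a' assume aJ: "a \<in> J" "a' \<in> J" and aa: "a \<in> underS r a'"
    have aI: "a \<in> I" "a' \<in> I" and va: "val a = v" "val a' = v" using aJ unfolding J_def by auto
    have i1: "{x\<in>T a. g a x = v} \<in> U" using valp[OF aI(1)] va(1) by simp
    have i2: "{x\<in>T a'. g a' x = v} \<in> U" using valp[OF aI(2)] va(2) by simp
    have "{x\<in>T a. g a x = v} \<inter> {x\<in>T a'. g a' x = v} \<in> U" using U(3) i1 i2 by blast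
    then have "{x\<in>T a. g a x = v} \<inter> {x\<in>T a'. g a' x = v} \<noteq> {}" using U(2) by auto
    then obtain b where b: "b \<in> T a" "g a b = v" "b \<in> T a'" "g a' b = v" by blast
    have bI: "b \<in> I" "a \<in> underS r b" "a' \<in> underS r b" using b unfolding T_def by auto
    have 1: "dd a b \<in> underS r k \<times> RR" "((a, fst (dd a b)), (b, d0)) \<in> snd (dd a b)"
      using ddp[OF aI(1) bI(1) bI(2)] by auto
    have 2: "dd a' b \<in> underS r k \<times> RR" "((a', fst (dd a' b)), (b, d0)) \<in> snd (dd a' b)"
      using ddp[OF aI(2) bI(1) bI(3)] by auto
    have e1: "p (fst (dd a b)) = q" "snd (dd a b) = R" using b(2) qR(1) unfolding g_def by auto
    have e2: "p (fst (dd a' b)) = q" "snd (dd a' b) = R" using b(4) qR(1) unfolding g_def by auto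
    define d where "d = fst (dd a b)"
    define d' where "d' = fst (dd a' b)"
    have dW: "d \<in> W" "d' \<in> W" using 1(1) 2(1) e1 e2 unfolding W_def d_def d'_def by auto
    have r1: "((a,d),(b,d0)) \<in> R" and r2: "((a',d'),(b,d0)) \<in> R"
      using 1(2) 2(2) e1 e2 unfolding d_def d'_def by auto
    have tlR: "tree_like R" using Rp[rule_format, OF qR(3)] by (rule conjunct1)
    have lev: "\<forall>a0 b0 a1 b1. ((a0, b0), (a1, b1)) \<in> R \<longrightarrow> a0 \<in> underS r a1"
      using Rp[rule_format, OF qR(3)] by (rule conjunct2)
    have "(a,d) = (a',d') \<or> ((a,d),(a',d')) \<in> R \<or> ((a',d'),(a,d)) \<in> R"
      using tlR r1 r2 unfolding tree_like_def by blast
    moreover have "a \<noteq> a'" using aa by (simp add: US_iff)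
    moreover have "((a',d'),(a,d)) \<notin> R"
    proof
      assume "((a',d'),(a,d)) \<in> R"
      then have "a' \<in> underS r a" using lev by blast
      then have "(a',a) \<in> r" by (simp add: US_iff)
      then show False using US_not[OF wo aa] by blast
    qed
    ultimately have "((a,d),(a',d')) \<in> R" by auto
    then show "\<exists>d\<in>W. \<exists>d'\<in>W. \<exists>R'\<in>{R}. ((a,d),(a',d')) \<in> R'" using dW by blast
  qed
  have tl1: "\<forall>R'\<in>{R}. tree_like R'" using Rp qR(3) by auto
  have J: "unbounded_in r J l" using v(2) unfolding J_def .
  have "\<exists>R'\<in>{R}. \<exists>bb. bb \<subseteq> J \<times> W \<and> (\<forall>x\<in>bb. \<forall>y\<in>bb. x = y \<or> (x,y) \<in> R' \<or> (y,x) \<in> R') \<and>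
           unbounded_in r {a\<in>J. \<exists>c. (a,c) \<in> bb} l"
    by (rule narrow[OF wo n'(2) reg n'l J n'(3) n'(4) tl1 conn])
  then obtain bb where bb: "bb \<subseteq> J \<times> W" "\<forall>x\<in>bb. \<forall>y\<in>bb. x = y \<or> (x,y) \<in> R \<or> (y,x) \<in> R"
     "unbounded_in r {a\<in>J. \<exists>c. (a,c) \<in> bb} l" by blast
  have JI: "J \<subseteq> I" unfolding J_def by auto
  have WK: "W \<subseteq> underS r k" unfolding W_def by auto
  have "bb \<subseteq> I \<times> underS r k" using bb(1) JI WK by blast
  then have br: "is_branch r I k R bb" unfolding is_branch_def using bb(2) by blast
  have "{a\<in>I. \<exists>c. (a,c) \<in> bb} = {a\<in>J. \<exists>c. (a,c) \<in> bb}" using bb(1) JI by blast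
  then have "unbounded_in r {a\<in>I. \<exists>c. (a,c) \<in> bb} l" using bb(3) by simp
  then show ?thesis unfolding has_cofinal_branch_def using qR(3) br by blast
qed

lemma succ_reg: assumes wo: "well_order r" and infm: "infinite_card r m" and cs: "is_card_succ r m l"
  shows "regular_card r l"
proof -
  have ocl: "ord_card r l" and ml: "m \<in> underS r l" and le: "\<forall>g \<in> underS r l. |underS r g| \<le>o |underS r m|"
    using cs unfolding is_card_succ_def by auto
  have im: "infinite (underS r m)" using infm unfolding infinite_card_def by (elim conjE)
  have "underS r m \<subseteq> underS r l" using US_trans2[OF wo _ ml] by blast
  then have il: "infinite (underS r l)" using im finite_subset by blast
  have "|A| =o |underS r l|" if A: "unbounded_in r A l" for A
  proof (rule ccontr)
    assume ne: "\<not> |A| =o |underS r l|"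
    have Al: "A \<subseteq> underS r l" using A unfolding unbounded_in_def by blast
    have cA: "|A| <o |underS r l|" using card_of_mono1[OF Al] ne ordLeq_iff_ordLess_or_ordIso by blast
    obtain g where g: "g \<in> underS r l" "|A| \<le>o |underS r g|" using below_card[OF wo cA] by blast
    have cAm: "|A| \<le>o |underS r m|" using g le ordLeq_transitive by blast
    have sub: "underS r l \<subseteq> (\<Union>a\<in>A. underS r a \<union> {a})"
    proof
      fix x assume "x \<in> underS r l"
      then obtain a where "a \<in> A" "(x,a) \<in> r" using A unfolding unbounded_in_def by blast
      then show "x \<in> (\<Union>a\<in>A. underS r a \<union> {a})" by (auto simp: US_iff)
    qed
    have each: "\<forall>a\<in>A. |underS r a \<union> {a}| \<le>o |underS r m|"
    proof
      fix a assume "a \<in> A"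
      then have "|underS r a| \<le>o |underS r m|" using le Al by blast
      moreover have "|{a}| \<le>o |underS r m|" proof -
        have "underS r m \<noteq> {}" using im by auto
        then show ?thesis by (rule card_of_singl_ordLeq)
      qed
      moreover have "Card_order |underS r m|" by (rule card_of_Card_order)
      moreover have "\<not> finite (Field |underS r m| )" using im by (simp add: Field_card_of)
      ultimately show "|underS r a \<union> {a}| \<le>o |underS r m|"
        using card_of_Un_ordLeq_infinite_Field[of "|underS r m|" "underS r a" "{a}"] by blast
    qed
    have "|\<Union>a\<in>A. underS r a \<union> {a}| \<le>o |underS r m|"
      using card_of_UNION_ordLeq_infinite[OF im cAm each] .
    then have "|underS r l| \<le>o |underS r m|" using card_of_mono1[OF sub] ordLeq_transitive by blast
    moreover have "|underS r m| <o |underS r l|" using ordc_less[OF ocl ml] .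
    ultimately show False using not_ordLess_ordLeq by blast
  qed
  then show ?thesis unfolding regular_card_def infinite_card_def using ocl il by blast
qed

theorem mainTheorem6:
  fixes r :: "'u rel" and m :: 'u
  assumes "well_order r"
    and "singular_limit_of_strongly_compacts r m"
  shows "(\<forall>l I k \<R>. regular_card r l \<and> m \<in> underS r l \<and> strong_lambda_system r l I k \<R> \<and>
            (k, m) \<in> r \<and> |\<R>| <o |underS r m| \<longrightarrow> has_cofinal_branch r l I k \<R>) \<and>
         (\<forall>l. is_card_succ r m l \<longrightarrow> strong_system_property r l)"
proof (intro conjI allI impI)
  fix l I k RR
  assume H: "regular_card r l \<and> m \<in> underS r l \<and> strong_lambda_system r l I k RR \<and>
            (k, m) \<in> r \<and> |RR| <o |underS r m|"
  have "underS r k \<subseteq> underS r m" using H US_trans[OF assms(1)] by blast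
  then have "|underS r k| \<le>o |underS r m|" by (rule card_of_mono1)
  then show "has_cofinal_branch r l I k RR" using main_general[OF assms] H by blast
next
  fix l assume cs: "is_card_succ r m l"
  have reg: "regular_card r l" using succ_reg[OF assms(1) sl_inf[OF assms(2)] cs] .
  have ml: "m \<in> underS r l" and le: "\<forall>g \<in> underS r l. |underS r g| \<le>o |underS r m|"
    using cs unfolding is_card_succ_def by auto
  show "strong_system_property r l"
    unfolding strong_system_property_def
  proof (intro conjI allI impI)
    show "regular_card r l" by (rule reg)
    fix I k RR
    assume H: "strong_lambda_system r l I k RR \<and> (\<exists>g \<in> underS r l. |RR| <o |underS r g| )"
    have "k \<in> underS r l" using H unfolding strong_lambda_system_def lambda_system_def by blast
    then have ck: "|underS r k| \<le>o |underS r m|" using le by blast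
    obtain g where "g \<in> underS r l" "|RR| <o |underS r g|" using H by blast
    then have cR: "|RR| <o |underS r m|" using le ordLess_ordLeq_trans by blast
    show "has_cofinal_branch r l I k RR" using main_general[OF assms reg ml _ ck cR] H by blast
  qed
qed


end
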